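(* For every $n\in\mathbb N$, $TC(M_n)=1$, where $M_n$ is the algebra of complex $n\times n$ matrices.
   Context: All tensor products are minimal. For a unital $C^*$-algebra $A$ let $p_0,p_1:A\to A\otimes A$ be $p_0(a)=a\otimes 1$, $p_1(a)=1\otimes a$, and for $t\in[0,1]$ and a $C^*$-algebra $B$ let $\mathrm{ev}_t:B\otimes C[0,1]\to B$ be evaluation at $t$. The topological complexity $TC(A)$ is the minimal number $n$ such that there exist $C^*$-algebras $B_1,\dots,B_n$ with surjective $*$-homomorphisms $q_i:A\otimes A\to B_i$ satisfying $\bigcap_{i=1}^n\ker q_i=\{0\}$, together with $*$-homomorphisms $\sigma_i:A\to B_i\otimes C[0,1]$ such that $\mathrm{ev}_k\circ\sigma_i=q_i\circ p_k$ for $k=0,1$ and all $i$; $TC(A)=\infty$ if no such $n$ exists. *)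

theory Defs
  imports "HOL-Analysis.Analysis" "Jordan_Normal_Form.Matrix" "HOL-Library.Extended_Nat"
begin

abbreviation Mn :: "nat \<Rightarrow> complex mat set" where
  "Mn n \<equiv> carrier_mat n n"

definition ctrans :: "complex mat \<Rightarrow> complex mat" where
  "ctrans A = mat (dim_col A) (dim_row A) (\<lambda>(i,j). cnj (A $$ (j,i)))"

text \<open>Kronecker product; M_n \<otimes> M_n = M_(n*n) with a \<otimes> b = kron a b.\<close>
definition kron :: "complex mat \<Rightarrow> complex mat \<Rightarrow> complex mat" where
  "kron A B = mat (dim_row A * dim_row B) (dim_col A * dim_col B)
     (\<lambda>(i,j). A $$ (i div dim_row B, j div dim_col B) * B $$ (i mod dim_row B, j mod dim_col B))"

definition p0 :: "nat \<Rightarrow> complex mat \<Rightarrow> complex mat" where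
  "p0 n a = kron a (1\<^sub>m n)"
definition p1 :: "nat \<Rightarrow> complex mat \<Rightarrow> complex mat" where
  "p1 n a = kron (1\<^sub>m n) a"

text \<open>A (finite-dimensional, hence C*-) *-subalgebra of M_m.\<close>
definition star_subalg :: "nat \<Rightarrow> complex mat set \<Rightarrow> bool" where
  "star_subalg m B \<longleftrightarrow> B \<subseteq> carrier_mat m m \<and> 0\<^sub>m m m \<in> B \<and>
     (\<forall>x\<in>B. \<forall>y\<in>B. x + y \<in> B \<and> x * y \<in> B) \<and>
     (\<forall>c. \<forall>x\<in>B. c \<cdot>\<^sub>m x \<in> B) \<and> (\<forall>x\<in>B. ctrans x \<in> B)"

definition star_hom :: "nat \<Rightarrow> complex mat set \<Rightarrow> (complex mat \<Rightarrow> complex mat) \<Rightarrow> bool" where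
  "star_hom k B f \<longleftrightarrow> (\<forall>x\<in>carrier_mat k k. f x \<in> B) \<and>
     (\<forall>x\<in>carrier_mat k k. \<forall>y\<in>carrier_mat k k.
        f (x + y) = f x + f y \<and> f (x * y) = f x * f y) \<and>
     (\<forall>c. \<forall>x\<in>carrier_mat k k. f (c \<cdot>\<^sub>m x) = c \<cdot>\<^sub>m f x) \<and>
     (\<forall>x\<in>carrier_mat k k. f (ctrans x) = ctrans (f x))"

text \<open>One member of a cover: a quotient q : M_n \<otimes> M_n \<rightarrow> B (B \<subseteq> M_m) together with
  a *-homomorphism sigma : M_n \<rightarrow> B \<otimes> C[0,1] = C([0,1],B), given as a family
  of *-homomorphisms sigma(-)(t), t \<in> [0,1], continuous in t, with
  ev_0 \<circ> sigma = q \<circ> p_0 and ev_1 \<circ> sigma = q \<circ> p_1.\<close>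
definition TC_piece :: "nat \<Rightarrow> nat \<Rightarrow> complex mat set \<Rightarrow> (complex mat \<Rightarrow> complex mat)
     \<Rightarrow> (complex mat \<Rightarrow> real \<Rightarrow> complex mat) \<Rightarrow> bool" where
  "TC_piece n m B q \<sigma> \<longleftrightarrow>
     star_subalg m B \<and> star_hom (n*n) B q \<and> q ` carrier_mat (n*n) (n*n) = B \<and>
     (\<forall>t\<in>{0..1}. star_hom n B (\<lambda>a. \<sigma> a t)) \<and>
     (\<forall>a\<in>carrier_mat n n. \<forall>i<m. \<forall>j<m. continuous_on {0..1} (\<lambda>t. \<sigma> a t $$ (i,j))) \<and>
     (\<forall>a\<in>carrier_mat n n. \<sigma> a 0 = q (p0 n a) \<and> \<sigma> a 1 = q (p1 n a))"

definition TC_cover :: "nat \<Rightarrow> nat \<Rightarrow> bool" where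
  "TC_cover n k \<longleftrightarrow> (\<exists>m B q \<sigma>. (\<forall>i<k. TC_piece n (m i) (B i) (q i) (\<sigma> i)) \<and>
     (\<forall>x\<in>carrier_mat (n*n) (n*n). (\<forall>i<k. q i x = 0\<^sub>m (m i) (m i)) \<longrightarrow> x = 0\<^sub>m (n*n) (n*n)))"

definition TC_Mn :: "nat \<Rightarrow> enat" where
  "TC_Mn n = (if \<exists>k. TC_cover n k then enat (LEAST k. TC_cover n k) else \<infinity>)"

end

theory Submission
  imports Defs
begin


lemma sum_prod_split:
  fixes f :: "nat \<Rightarrow> 'x::comm_monoid_add"
  shows "(\<Sum>k<a*b. f k) = (\<Sum>u<a. \<Sum>v<b. f (u*b+v))"
proof (induction a)
  case 0 then show ?case by simp
next
  case (Suc a)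
  have e: "{..<Suc a*b} = {..<a*b} \<union> {a*b..<a*b+b}" by auto
  have "(\<Sum>k<Suc a*b. f k) = (\<Sum>k<a*b. f k) + (\<Sum>k\<in>{a*b..<a*b+b}. f k)"
    unfolding e by (rule sum.union_disjoint) auto
  also have "(\<Sum>k\<in>{a*b..<a*b+b}. f k) = (\<Sum>v<b. f (a*b+v))"
    using sum.shift_bounds_nat_ivl[of f 0 "a*b" b]
    by (simp add: add.commute lessThan_atLeast0)
  finally show ?case using Suc by simp
qed

lemma sw_facts:
  fixes i n :: nat assumes "i < n*n"
  shows "((i mod n)*n + i div n) < n*n" "((i mod n)*n + i div n) div n = i mod n"
        "((i mod n)*n + i div n) mod n = i div n"
        "(((i mod n)*n + i div n) mod n)*n + ((i mod n)*n + i div n) div n = i"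
proof -
  have n: "n > 0" using assms by (cases n) auto
  have d: "i div n < n" using assms by (simp add: less_mult_imp_div_less)
  have m: "i mod n < n" using n by simp
  show "((i mod n)*n + i div n) div n = i mod n" using d n by simp
  show "((i mod n)*n + i div n) mod n = i div n" using d n by simp
  show "((i mod n)*n + i div n) < n*n"
  proof -
    have "(i mod n)*n + i div n < (i mod n)*n + n" using d by simp
    also have "\<dots> = (i mod n + 1) * n" by simp
    also have "\<dots> \<le> n*n" using m by (metis Suc_eq_plus1 Suc_leI mult_le_mono1)
    finally show ?thesis .
  qed
  show "(((i mod n)*n + i div n) mod n)*n + ((i mod n)*n + i div n) div n = i"
    using d n by (simp add: mult.commute)
qed



lemma ctrans_carrier[simp]: "dim_row (ctrans A) = dim_col A" "dim_col (ctrans A) = dim_row A"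
  unfolding ctrans_def by simp_all

lemma ctrans_carrier_mat[simp]: "A \<in> carrier_mat r c \<Longrightarrow> ctrans A \<in> carrier_mat c r"
  unfolding carrier_mat_def by simp

lemma ctrans_index[simp]: "i < dim_col A \<Longrightarrow> j < dim_row A \<Longrightarrow> ctrans A $$ (i,j) = cnj (A $$ (j,i))"
  unfolding ctrans_def by simp

lemma ctrans_ctrans[simp]: "ctrans (ctrans A) = A"
  by (rule eq_matI) simp_all

lemma ctrans_add: assumes "A \<in> carrier_mat r c" "B \<in> carrier_mat r c" shows "ctrans (A + B) = ctrans A + ctrans B"
proof -
  have d: "dim_row A = r" "dim_col A = c" "dim_row B = r" "dim_col B = c" using assms by auto
  show ?thesis by (rule eq_matI) (simp_all add: d)
qed

lemma ctrans_smult: "ctrans (a \<cdot>\<^sub>m A) = cnj a \<cdot>\<^sub>m ctrans A"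
  by (rule eq_matI) simp_all

lemma ctrans_mult: assumes "A \<in> carrier_mat r k" "B \<in> carrier_mat k c"
  shows "ctrans (A * B) = ctrans B * ctrans A"
proof -
  have d: "dim_row A = r" "dim_col A = k" "dim_row B = k" "dim_col B = c" using assms by auto
  show ?thesis
  proof (rule eq_matI)
    fix i j assume ij: "i < dim_row (ctrans B * ctrans A)" "j < dim_col (ctrans B * ctrans A)"
    then have i: "i < c" and j: "j < r" by (simp_all add: d)
    have "ctrans (A * B) $$ (i,j) = cnj (\<Sum>l<k. A $$ (j,l) * B $$ (l,i))"
      using i j by (simp add: d scalar_prod_def lessThan_atLeast0)
    also have "\<dots> = (\<Sum>l<k. cnj (B $$ (l,i)) * cnj (A $$ (j,l)))"
      by (simp add: mult.commute)
    also have "\<dots> = (ctrans B * ctrans A) $$ (i,j)"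
      using i j by (simp add: d scalar_prod_def lessThan_atLeast0)
    finally show "ctrans (A * B) $$ (i,j) = (ctrans B * ctrans A) $$ (i,j)" .
  qed (simp_all add: d)
qed

lemma divn_lt: "i < n*n \<Longrightarrow> i div n < (n::nat)" by (simp add: less_mult_imp_div_less)
lemma modn_lt: "i < n*n \<Longrightarrow> i mod n < (n::nat)" by (cases n) auto

lemma p0_dims[simp]: "x \<in> carrier_mat n n \<Longrightarrow> dim_row (p0 n x) = n*n"  "x \<in> carrier_mat n n \<Longrightarrow> dim_col (p0 n x) = n*n"
  unfolding p0_def kron_def by simp_all

lemma p0_carrier[simp]: "x \<in> carrier_mat n n \<Longrightarrow> p0 n x \<in> carrier_mat (n*n) (n*n)"
  by (rule carrier_matI) simp_all

lemma p1_carrier[simp]: "x \<in> carrier_mat n n \<Longrightarrow> p1 n x \<in> carrier_mat (n*n) (n*n)"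
  unfolding p1_def kron_def by (rule carrier_matI) simp_all

lemma p0_index: "x \<in> carrier_mat n n \<Longrightarrow> i < n*n \<Longrightarrow> j < n*n \<Longrightarrow>
   p0 n x $$ (i,j) = x $$ (i div n, j div n) * (if i mod n = j mod n then 1 else 0)"
  unfolding p0_def kron_def by (simp add: modn_lt)

lemma p1_index: "x \<in> carrier_mat n n \<Longrightarrow> i < n*n \<Longrightarrow> j < n*n \<Longrightarrow>
   p1 n x $$ (i,j) = (if i div n = j div n then 1 else 0) * x $$ (i mod n, j mod n)"
  unfolding p1_def kron_def by (simp add: divn_lt)

lemma p0_add: assumes x: "x \<in> carrier_mat n n" and y: "y \<in> carrier_mat n n"
  shows "p0 n (x + y) = p0 n x + p0 n y"
proof -
  have xy: "x + y \<in> carrier_mat n n" using x y by simp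
  have dx: "dim_row x = n" "dim_col x = n" "dim_row y = n" "dim_col y = n" using x y by auto
  show ?thesis
    by (rule eq_matI) (simp_all add: p0_index x y xy divn_lt dx algebra_simps)
qed

lemma p0_smult: assumes x: "x \<in> carrier_mat n n" shows "p0 n (c \<cdot>\<^sub>m x) = c \<cdot>\<^sub>m p0 n x"
proof -
  have xy: "c \<cdot>\<^sub>m x \<in> carrier_mat n n" using x by simp
  have dx: "dim_row x = n" "dim_col x = n" using x by auto
  show ?thesis
    by (rule eq_matI) (simp_all add: p0_index x xy divn_lt dx)
qed

lemma p0_ctrans: assumes x: "x \<in> carrier_mat n n" shows "ctrans (p0 n x) = p0 n (ctrans x)"
proof -
  have xy: "ctrans x \<in> carrier_mat n n" using x by simp
  have dx: "dim_row x = n" "dim_col x = n" using x by auto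
  show ?thesis
    by (rule eq_matI) (simp_all add: p0_index x xy divn_lt dx)
qed

lemma p0_mult: assumes x: "x \<in> carrier_mat n n" and y: "y \<in> carrier_mat n n"
  shows "p0 n (x * y) = p0 n x * p0 n y"
proof -
  have xy: "x * y \<in> carrier_mat n n" using x y by simp
  have dx: "dim_row x = n" "dim_col x = n" "dim_row y = n" "dim_col y = n" using x y by auto
  show ?thesis
  proof (rule eq_matI)
  fix i j assume ij: "i < dim_row (p0 n x * p0 n y)" "j < dim_col (p0 n x * p0 n y)"
  then have i: "i < n*n" and j: "j < n*n" using x y by simp_all
  have "(p0 n x * p0 n y) $$ (i,j) = (\<Sum>k<n*n. p0 n x $$ (i,k) * p0 n y $$ (k,j))"
    using x y i j by (simp add: scalar_prod_def lessThan_atLeast0)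
  also have "\<dots> = (\<Sum>u<n. \<Sum>v<n. p0 n x $$ (i,u*n+v) * p0 n y $$ (u*n+v,j))"
    by (rule sum_prod_split)
  also have "\<dots> = (\<Sum>u<n. \<Sum>v<n. x $$ (i div n, u) * y $$ (u, j div n) *
        ((if v = i mod n then 1 else 0) * (if v = j mod n then 1 else 0)))"
  proof (intro sum.cong refl)
    fix u v assume "u \<in> {..<n}" "v \<in> {..<n}"
    then have uv: "u < n" "v < n" by auto
    have "u*n+v < u*n + n" using uv by simp
    also have "\<dots> = (u+1)*n" by simp
    also have "\<dots> \<le> n*n" using uv by (intro mult_le_mono1) simp
    finally have k: "u*n+v < n*n" .
    have e1: "(u*n+v) div n = u" "(u*n+v) mod n = v" using uv by simp_all
    show "p0 n x $$ (i,u*n+v) * p0 n y $$ (u*n+v,j) = x $$ (i div n, u) * y $$ (u, j div n) *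
        ((if v = i mod n then 1 else 0) * (if v = j mod n then 1 else 0))"
      using k x y i j uv by (simp add: p0_index e1)
  qed
  also have "\<dots> = (\<Sum>u<n. x $$ (i div n, u) * y $$ (u, j div n) * (if i mod n = j mod n then 1 else 0))"
  proof (intro sum.cong refl)
    fix u
    let ?C = "x $$ (i div n, u) * y $$ (u, j div n)"
    have pw: "\<And>v. ?C * ((if v = i mod n then 1 else 0) * (if v = j mod n then (1::complex) else 0))
       = (if v = i mod n then ?C * (if i mod n = j mod n then 1 else 0) else 0)" by auto
    have "(\<Sum>v<n. ?C * ((if v = i mod n then 1 else 0) * (if v = j mod n then (1::complex) else 0)))
       = (\<Sum>v<n. (if v = i mod n then ?C * (if i mod n = j mod n then 1 else 0) else 0))"
      by (simp only: pw)
    also have "\<dots> = ?C * (if i mod n = j mod n then 1 else 0)"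
      using modn_lt[OF i] by (simp only: sum.delta finite_lessThan) simp
    finally show "(\<Sum>v<n. x $$ (i div n, u) * y $$ (u, j div n) *
        ((if v = i mod n then 1 else 0) * (if v = j mod n then 1 else 0))) = x $$ (i div n, u) * y $$ (u, j div n) * (if i mod n = j mod n then 1 else 0)" .
  qed
  also have "\<dots> = p0 n (x * y) $$ (i,j)"
    using i j divn_lt[OF i] divn_lt[OF j] by (simp add: p0_index xy dx scalar_prod_def lessThan_atLeast0 sum_distrib_right)
  finally show "p0 n (x * y) $$ (i,j) = (p0 n x * p0 n y) $$ (i,j)" by simp
  qed (simp_all add: x y xy)
qed



definition sw :: "nat \<Rightarrow> nat \<Rightarrow> nat" where "sw n i = (i mod n)*n + i div n"

definition Umat :: "nat \<Rightarrow> complex \<Rightarrow> complex \<Rightarrow> complex mat" where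
  "Umat n a b = mat (n*n) (n*n) (\<lambda>(i,j). a * (if i = j then 1 else 0) + b * (if j = sw n i then 1 else 0))"

lemma sw_lt: "i < n*n \<Longrightarrow> sw n i < n*n" unfolding sw_def using sw_facts(1) .
lemma sw_sw: "i < n*n \<Longrightarrow> sw n (sw n i) = i" unfolding sw_def using sw_facts(4) .
lemma sw_div: "i < n*n \<Longrightarrow> sw n i div n = i mod n" unfolding sw_def using sw_facts(2) .
lemma sw_mod: "i < n*n \<Longrightarrow> sw n i mod n = i div n" unfolding sw_def using sw_facts(3) .
lemma sw_eq: "i < n*n \<Longrightarrow> j < n*n \<Longrightarrow> (j = sw n i) = (i = sw n j)"
  using sw_sw by metis

lemma Umat_dims[simp]: "dim_row (Umat n a b) = n*n" "dim_col (Umat n a b) = n*n"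
  unfolding Umat_def by simp_all

lemma Umat_carrier[simp]: "Umat n a b \<in> carrier_mat (n*n) (n*n)"
  by (rule carrier_matI) simp_all

lemma Umat_index: "i < n*n \<Longrightarrow> j < n*n \<Longrightarrow>
  Umat n a b $$ (i,j) = a * (if i = j then 1 else 0) + b * (if j = sw n i then 1 else 0)"
  unfolding Umat_def by simp

lemma Umat_left: assumes W: "W \<in> carrier_mat (n*n) c"
  shows "Umat n a b * W = mat (n*n) c (\<lambda>(i,j). a * W $$ (i,j) + b * W $$ (sw n i, j))"
proof -
  have d: "dim_row W = n*n" "dim_col W = c" using W by auto
  show ?thesis
  proof (rule eq_matI)
    fix i j assume "i < dim_row (mat (n*n) c (\<lambda>(i,j). a * W $$ (i,j) + b * W $$ (sw n i, j)))"
        "j < dim_col (mat (n*n) c (\<lambda>(i,j). a * W $$ (i,j) + b * W $$ (sw n i, j)))"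
    then have i: "i < n*n" and j: "j < c" by simp_all
    have "(Umat n a b * W) $$ (i,j) = (\<Sum>k<n*n. Umat n a b $$ (i,k) * W $$ (k,j))"
      using i j by (simp add: d scalar_prod_def lessThan_atLeast0)
    also have "\<dots> = (\<Sum>k<n*n. (if i = k then a * W $$ (k,j) else 0) + (if k = sw n i then b * W $$ (k,j) else 0))"
      by (intro sum.cong refl) (simp add: Umat_index i algebra_simps)
    also have "\<dots> = a * W $$ (i,j) + b * W $$ (sw n i, j)"
      by (simp only: sum.distrib sum.delta sum.delta' finite_lessThan) (simp add: i sw_lt)
    finally show "(Umat n a b * W) $$ (i,j) = mat (n*n) c (\<lambda>(i,j). a * W $$ (i,j) + b * W $$ (sw n i, j)) $$ (i,j)"
      using i j by simp
  qed (simp_all add: d)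
qed

lemma Umat_right: assumes W: "W \<in> carrier_mat r (n*n)"
  shows "W * Umat n a b = mat r (n*n) (\<lambda>(i,j). a * W $$ (i,j) + b * W $$ (i, sw n j))"
proof -
  have d: "dim_row W = r" "dim_col W = n*n" using W by auto
  show ?thesis
  proof (rule eq_matI)
    fix i j assume "i < dim_row (mat r (n*n) (\<lambda>(i,j). a * W $$ (i,j) + b * W $$ (i, sw n j)))"
        "j < dim_col (mat r (n*n) (\<lambda>(i,j). a * W $$ (i,j) + b * W $$ (i, sw n j)))"
    then have i: "i < r" and j: "j < n*n" by simp_all
    have "(W * Umat n a b) $$ (i,j) = (\<Sum>k<n*n. W $$ (i,k) * Umat n a b $$ (k,j))"
      using i j by (simp add: d scalar_prod_def lessThan_atLeast0)
    also have "\<dots> = (\<Sum>k<n*n. (if j = k then a * W $$ (i,k) else 0) + (if k = sw n j then b * W $$ (i,k) else 0))"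
    proof (intro sum.cong refl)
      fix k assume "k \<in> {..<n*n}"
      then have k: "k < n*n" by simp
      show "W $$ (i,k) * Umat n a b $$ (k,j) = (if j = k then a * W $$ (i,k) else 0) + (if k = sw n j then b * W $$ (i,k) else 0)"
        using sw_eq[OF k j] by (simp add: Umat_index k j algebra_simps)
    qed
    also have "\<dots> = a * W $$ (i,j) + b * W $$ (i, sw n j)"
      by (simp only: sum.distrib sum.delta sum.delta' finite_lessThan) (simp add: j sw_lt)
    finally show "(W * Umat n a b) $$ (i,j) = mat r (n*n) (\<lambda>(i,j). a * W $$ (i,j) + b * W $$ (i, sw n j)) $$ (i,j)"
      using i j by simp
  qed (simp_all add: d)
qed

lemma Umat_mult: "Umat n a b * Umat n c d = Umat n (a*c+b*d) (a*d+b*c)"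
proof (rule eq_matI)
  fix i j assume "i < dim_row (Umat n (a*c+b*d) (a*d+b*c))" "j < dim_col (Umat n (a*c+b*d) (a*d+b*c))"
  then have i: "i < n*n" and j: "j < n*n" by simp_all
  show "(Umat n a b * Umat n c d) $$ (i,j) = Umat n (a*c+b*d) (a*d+b*c) $$ (i,j)"
    unfolding Umat_left[OF Umat_carrier]
    using sw_eq[OF i j] sw_sw[OF i] sw_lt[OF i]
    by (auto simp add: Umat_index i j algebra_simps)
qed simp_all

lemma Umat_ctrans: "ctrans (Umat n a b) = Umat n (cnj a) (cnj b)"
proof (rule eq_matI)
  fix i j assume "i < dim_row (Umat n (cnj a) (cnj b))" "j < dim_col (Umat n (cnj a) (cnj b))"
  then have i: "i < n*n" and j: "j < n*n" by simp_all
  show "ctrans (Umat n a b) $$ (i,j) = Umat n (cnj a) (cnj b) $$ (i,j)"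
    using sw_eq[OF i j] by (simp add: Umat_index i j)
qed simp_all

lemma Umat_one: "Umat n 1 0 = 1\<^sub>m (n*n)"
  by (rule eq_matI) (simp_all add: Umat_index)

lemma Umat_swap: assumes x: "x \<in> carrier_mat n n"
  shows "Umat n 0 1 * p0 n x * Umat n 0 1 = p1 n x"
proof (rule eq_matI)
  fix i j assume "i < dim_row (p1 n x)" "j < dim_col (p1 n x)"
  then have i: "i < n*n" and j: "j < n*n" using x by (simp_all add: p1_def kron_def)
  have M: "mat (n*n) (n*n) (\<lambda>(i,j). 0 * p0 n x $$ (i,j) + 1 * p0 n x $$ (sw n i, j)) \<in> carrier_mat (n*n) (n*n)"
    by (rule carrier_matI) simp_all
  show "(Umat n 0 1 * p0 n x * Umat n 0 1) $$ (i,j) = p1 n x $$ (i,j)"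
    unfolding Umat_left[OF p0_carrier[OF x]] Umat_right[OF M]
    using i j by (simp add: sw_lt p0_index p1_index x sw_div sw_mod)
qed (use x in \<open>simp_all add: p1_def kron_def\<close>)



lemma conj_star_hom:
  assumes U: "U \<in> carrier_mat (n*n) (n*n)" and uni: "ctrans U * U = 1\<^sub>m (n*n)"
  shows "star_hom n (carrier_mat (n*n) (n*n)) (\<lambda>a. U * p0 n a * ctrans U)"
proof -
  let ?N = "n*n"
  have U': "ctrans U \<in> carrier_mat ?N ?N" using U by simp
  have mem: "U * P * ctrans U \<in> carrier_mat ?N ?N" if "P \<in> carrier_mat ?N ?N" for P
    using that U U' by (metis mult_carrier_mat)
  have add: "U * (P + Q) * ctrans U = U * P * ctrans U + U * Q * ctrans U"
    if P: "P \<in> carrier_mat ?N ?N" and Q: "Q \<in> carrier_mat ?N ?N" for P Q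
  proof -
    have "U * (P + Q) = U * P + U * Q" using U P Q by (rule mult_add_distrib_mat)
    moreover have "(U * P + U * Q) * ctrans U = U * P * ctrans U + U * Q * ctrans U"
      using U P Q U' by (intro add_mult_distrib_mat) (auto intro: mult_carrier_mat)
    ultimately show ?thesis by simp
  qed
  have canc: "ctrans U * (U * X) = X" if X: "X \<in> carrier_mat ?N c" for X c
  proof -
    have "ctrans U * (U * X) = (ctrans U * U) * X" by (rule assoc_mult_mat[symmetric, OF U' U X])
    also have "\<dots> = X" using uni X by simp
    finally show ?thesis .
  qed
  have mul: "U * (P * Q) * ctrans U = (U * P * ctrans U) * (U * Q * ctrans U)"
    if P: "P \<in> carrier_mat ?N ?N" and Q: "Q \<in> carrier_mat ?N ?N" for P Q
  proof -
    have QU: "Q * ctrans U \<in> carrier_mat ?N ?N" using Q U' by simp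
    have UP: "U * P \<in> carrier_mat ?N ?N" using U P by simp
    have UQU: "U * Q * ctrans U \<in> carrier_mat ?N ?N" by (rule mem[OF Q])
    have PQ: "P * Q \<in> carrier_mat ?N ?N" using P Q by simp
    have e1: "(U * P * ctrans U) * (U * Q * ctrans U) = U * P * (ctrans U * (U * Q * ctrans U))"
      by (rule assoc_mult_mat[OF UP U' UQU])
    have e2: "ctrans U * (U * Q * ctrans U) = Q * ctrans U"
      using assoc_mult_mat[OF U Q U'] canc[OF QU] by simp
    have e3: "U * P * (Q * ctrans U) = U * (P * Q) * ctrans U"
      using assoc_mult_mat[OF U P QU] assoc_mult_mat[OF P Q U'] assoc_mult_mat[OF U PQ U'] by simp
    show ?thesis using e1 e2 e3 by simp
  qed
  have smul: "U * (c \<cdot>\<^sub>m P) * ctrans U = c \<cdot>\<^sub>m (U * P * ctrans U)"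
    if P: "P \<in> carrier_mat ?N ?N" for P c
  proof -
    have "U * (c \<cdot>\<^sub>m P) = c \<cdot>\<^sub>m (U * P)" using U P by (rule mult_smult_distrib)
    moreover have "(c \<cdot>\<^sub>m (U * P)) * ctrans U = c \<cdot>\<^sub>m (U * P * ctrans U)"
      using U P U' by (meson mult_carrier_mat mult_smult_assoc_mat)
    ultimately show ?thesis by simp
  qed
  have ct: "ctrans (U * P * ctrans U) = U * ctrans P * ctrans U"
    if P: "P \<in> carrier_mat ?N ?N" for P
  proof -
    have "ctrans (U * P * ctrans U) = ctrans (ctrans U) * ctrans (U * P)"
      using U P U' by (meson ctrans_mult mult_carrier_mat)
    also have "ctrans (U * P) = ctrans P * ctrans U" using U P by (rule ctrans_mult)
    also have "ctrans (ctrans U) * (ctrans P * ctrans U) = U * ctrans P * ctrans U"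
      using assoc_mult_mat[OF U ctrans_carrier_mat[OF P] U'] by simp
    finally show ?thesis .
  qed
  show ?thesis
    unfolding star_hom_def
  proof (intro conjI ballI allI)
    fix x :: "complex mat" assume x: "x \<in> carrier_mat n n"
    show "U * p0 n x * ctrans U \<in> carrier_mat ?N ?N" using x by (simp add: mem)
  next
    fix x y :: "complex mat" assume x: "x \<in> carrier_mat n n" and y: "y \<in> carrier_mat n n"
    show "U * p0 n (x + y) * ctrans U = U * p0 n x * ctrans U + U * p0 n y * ctrans U"
      using x y by (simp add: p0_add add)
  next
    fix x y :: "complex mat" assume x: "x \<in> carrier_mat n n" and y: "y \<in> carrier_mat n n"
    show "U * p0 n (x * y) * ctrans U = U * p0 n x * ctrans U * (U * p0 n y * ctrans U)"
      using x y by (simp add: p0_mult mul)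
  next
    fix c and x :: "complex mat" assume x: "x \<in> carrier_mat n n"
    show "U * p0 n (c \<cdot>\<^sub>m x) * ctrans U = c \<cdot>\<^sub>m (U * p0 n x * ctrans U)"
      using x by (simp add: p0_smult smul)
  next
    fix x :: "complex mat" assume x: "x \<in> carrier_mat n n"
    show "U * p0 n (ctrans x) * ctrans U = ctrans (U * p0 n x * ctrans U)"
      using x by (simp add: ct p0_ctrans)
  qed
qed



definition zz :: "real \<Rightarrow> complex" where "zz t = exp (\<i> * of_real (pi * t))"
definition Ut :: "nat \<Rightarrow> real \<Rightarrow> complex mat" where
  "Ut n t = Umat n ((1 + zz t) / 2) ((1 - zz t) / 2)"
definition sig :: "nat \<Rightarrow> complex mat \<Rightarrow> real \<Rightarrow> complex mat" where
  "sig n a t = Ut n t * p0 n a * ctrans (Ut n t)"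

lemma zz_unit: "cnj (zz t) * zz t = 1"
proof -
  have "cnj (zz t) = exp (- (\<i> * of_real (pi * t)))" unfolding zz_def by (simp add: exp_cnj)
  then show ?thesis unfolding zz_def by (simp add: exp_minus field_simps)
qed

lemma Ut_unitary: "ctrans (Ut n t) * Ut n t = 1\<^sub>m (n*n)"
proof -
  let ?z = "zz t" let ?w = "cnj (zz t)"
  have u: "?w * ?z = 1" by (rule zz_unit)
  have a: "cnj ((1 + ?z) / 2) * ((1 + ?z) / 2) + cnj ((1 - ?z) / 2) * ((1 - ?z) / 2) = 1"
  proof -
    have "cnj ((1 + ?z) / 2) * ((1 + ?z) / 2) + cnj ((1 - ?z) / 2) * ((1 - ?z) / 2)
       = ((1 + ?w) * (1 + ?z) + (1 - ?w) * (1 - ?z)) / 4" by (simp add: field_simps)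
    also have "\<dots> = (2 + 2 * (?w * ?z)) / 4" by (simp add: algebra_simps)
    finally show ?thesis using u by simp
  qed
  have b: "cnj ((1 + ?z) / 2) * ((1 - ?z) / 2) + cnj ((1 - ?z) / 2) * ((1 + ?z) / 2) = 0"
  proof -
    have "cnj ((1 + ?z) / 2) * ((1 - ?z) / 2) + cnj ((1 - ?z) / 2) * ((1 + ?z) / 2)
       = ((1 + ?w) * (1 - ?z) + (1 - ?w) * (1 + ?z)) / 4" by (simp add: field_simps)
    also have "\<dots> = (2 - 2 * (?w * ?z)) / 4" by (simp add: algebra_simps)
    finally show ?thesis using u by simp
  qed
  show ?thesis unfolding Ut_def Umat_ctrans Umat_mult a b Umat_one ..
qed

lemma cont_Umat: assumes "continuous_on S f" "continuous_on S g"
  shows "\<forall>i<n*n. \<forall>j<n*n. continuous_on S (\<lambda>t. Umat n (f t) (g t) $$ (i,j))"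
  using assms by (simp add: Umat_index continuous_intros)

lemma cont_mult_entries:
  fixes M K :: "real \<Rightarrow> complex mat" and S :: "real set"
  assumes M: "\<And>t. M t \<in> carrier_mat r k" and K: "\<And>t. K t \<in> carrier_mat k c"
    and cM: "\<forall>i<r. \<forall>j<k. continuous_on S (\<lambda>t. M t $$ (i,j))"
    and cK: "\<forall>i<k. \<forall>j<c. continuous_on S (\<lambda>t. K t $$ (i,j))"
  shows "\<forall>i<r. \<forall>j<c. continuous_on S (\<lambda>t. (M t * K t) $$ (i,j))"
proof (intro allI impI)
  fix i j assume i: "i < r" and j: "j < c"
  have d: "\<And>t. dim_row (M t) = r" "\<And>t. dim_col (M t) = k" "\<And>t. dim_row (K t) = k" "\<And>t. dim_col (K t) = c"
    using M K by auto
  have e: "(\<lambda>t. (M t * K t) $$ (i,j)) = (\<lambda>t. \<Sum>l<k. M t $$ (i,l) * K t $$ (l,j))"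
    using i j by (simp add: d scalar_prod_def lessThan_atLeast0)
  show "continuous_on S (\<lambda>t. (M t * K t) $$ (i,j))"
    unfolding e by (rule continuous_on_sum, rule continuous_on_mult) (use cM cK i j in auto)
qed

lemma cont_zz: "continuous_on S zz"
  unfolding zz_def by (intro continuous_intros)

lemma cont_c1: "continuous_on S (\<lambda>t. (1 + zz t) / 2)"
  by (intro continuous_intros cont_zz) auto
lemma cont_c2: "continuous_on S (\<lambda>t. (1 - zz t) / 2)"
  by (intro continuous_intros cont_zz) auto
lemma cont_c3: "continuous_on S (\<lambda>t. cnj ((1 + zz t) / 2))"
  by (intro continuous_on_cnj cont_c1)
lemma cont_c4: "continuous_on S (\<lambda>t. cnj ((1 - zz t) / 2))"
  by (intro continuous_on_cnj cont_c2)

lemma ctrans_one: "ctrans (1\<^sub>m N) = 1\<^sub>m N"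
  by (rule eq_matI) simp_all

lemma sig_cont: assumes a: "a \<in> carrier_mat n n"
  shows "\<forall>i<n*n. \<forall>j<n*n. continuous_on S (\<lambda>t. sig n a t $$ (i,j))"
proof -
  have c1: "\<forall>i<n*n. \<forall>j<n*n. continuous_on S (\<lambda>t. Ut n t $$ (i,j))"
    unfolding Ut_def by (rule cont_Umat[OF cont_c1 cont_c2])
  have c2: "\<forall>i<n*n. \<forall>j<n*n. continuous_on S (\<lambda>t. ctrans (Ut n t) $$ (i,j))"
    unfolding Ut_def Umat_ctrans by (rule cont_Umat[OF cont_c3 cont_c4])
  have c3: "\<forall>i<n*n. \<forall>j<n*n. continuous_on S (\<lambda>t. p0 n a $$ (i,j))"
    by (simp add: continuous_on_const)
  have c4: "\<forall>i<n*n. \<forall>j<n*n. continuous_on S (\<lambda>t. (Ut n t * p0 n a) $$ (i,j))"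
    by (rule cont_mult_entries[OF _ _ c1 c3]) (simp_all add: Ut_def a)
  show ?thesis unfolding sig_def
    by (rule cont_mult_entries[OF _ _ c4 c2]) (simp_all add: Ut_def a mult_carrier_mat[OF Umat_carrier p0_carrier[OF a]])
qed

lemma sig_0: "a \<in> carrier_mat n n \<Longrightarrow> sig n a 0 = p0 n a"
  by (simp add: sig_def Ut_def zz_def Umat_one ctrans_one)

lemma sig_1: "a \<in> carrier_mat n n \<Longrightarrow> sig n a 1 = p1 n a"
  by (simp add: sig_def Ut_def zz_def Umat_ctrans Umat_swap)

lemma sig_star_hom: "star_hom n (carrier_mat (n*n) (n*n)) (\<lambda>a. sig n a t)"
  unfolding sig_def by (rule conj_star_hom[OF _ Ut_unitary]) (simp add: Ut_def)



lemma cover1: "TC_cover n 1"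
proof -
  have sub: "star_subalg (n*n) (carrier_mat (n*n) (n*n))"
    unfolding star_subalg_def by (auto simp: ctrans_carrier_mat)
  have qh: "star_hom (n*n) (carrier_mat (n*n) (n*n)) (\<lambda>x. x)"
    unfolding star_hom_def by auto
  have piece: "TC_piece n (n*n) (carrier_mat (n*n) (n*n)) (\<lambda>x. x) (sig n)"
    unfolding TC_piece_def
    using sub qh sig_star_hom sig_cont sig_0 sig_1 by auto
  show ?thesis unfolding TC_cover_def
    by (rule exI[of _ "\<lambda>_. n*n"], rule exI[of _ "\<lambda>_. carrier_mat (n*n) (n*n)"],
        rule exI[of _ "\<lambda>_ x. x"], rule exI[of _ "\<lambda>_. sig n"]) (use piece in auto)
qed

lemma not_cover0: assumes "n \<ge> 1" shows "\<not> TC_cover n 0"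
proof
  assume "TC_cover n 0"
  then have "1\<^sub>m (n*n) = (0\<^sub>m (n*n) (n*n) :: complex mat)" unfolding TC_cover_def by auto
  then have "(1\<^sub>m (n*n) :: complex mat) $$ (0,0) = (0\<^sub>m (n*n) (n*n) :: complex mat) $$ (0,0)" by simp
  moreover have "0 < n*n" using assms by simp
  ultimately show False by simp
qed

theorem mainTheorem10:
  fixes n :: nat
  assumes "n \<ge> 1"
  shows "TC_Mn n = 1"
proof -
  have "(LEAST k. TC_cover n k) = 1"
  proof (rule Least_equality)
    show "TC_cover n 1" by (rule cover1)
    fix k assume "TC_cover n k"
    then show "1 \<le> k" using not_cover0[OF assms] by (cases k) auto
  qed
  then show ?thesis unfolding TC_Mn_def using cover1 by (auto simp: one_enat_def)
qed

end
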